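(* Let $(P,\le,\mu,\gamma)$ be a preordered heap and let $\tau\colon P\times P\to P$ be its target multiplication, $\tau(a,b)=\gamma(\mu(\gamma a,\gamma b))$. Then for every $a\in P$: (i) $(\mu_a,\tau^{\gamma a})$ is an adjoint pair, i.e. for all $b,c\in P$: $\mu(a,b)\le c$ if and only if $b\le \tau(c,\gamma a)$; (ii) $(\mu^a,\tau_{\gamma a})$ is an adjoint pair, i.e. for all $b,c\in P$: $\mu(b,a)\le c$ if and only if $b\le \tau(\gamma a,c)$.
   Context: A preordered heap is a structure $(P,\le,\mu,\gamma)$ where $(P,\le)$ is a preorder (reflexive and transitive relation); $\mu\colon P\times P\to P$ (source multiplication) is monotonic in both arguments; $\gamma\colon P\to P$ (involution) is antitone ($a\le b\Rightarrow \gamma b\le\gamma a$); and the following axioms hold: (A1) $\gamma(\gamma(a))=a$ for all $a$; (A2a, left regularity) $\mu(a,\gamma(\mu(\gamma b,a)))\le b$ for all $a,b\in P$; (A2b, right regularity) $\mu(\gamma(\mu(a,\gamma b)),a)\le b$ for all $a,b\in P$. For a binary operation $\nu$ and $a\in P$, write $\nu_a(b)=\nu(a,b)$ (left multiplication by $a$) and $\nu^a(b)=\nu(b,a)$ (right multiplication by $a$). Monotone maps $L,R\colon P\to P$ form an adjoint pair $(L,R)$ if $Lb\le c \iff b\le Rc$ for all $b,c$. *)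

theory Defs
  imports Main
begin

definition preordered_heap ::
  "('a \<Rightarrow> 'a \<Rightarrow> bool) \<Rightarrow> ('a \<Rightarrow> 'a \<Rightarrow> 'a) \<Rightarrow> ('a \<Rightarrow> 'a) \<Rightarrow> bool" where
  "preordered_heap le mu gam \<longleftrightarrow>
     (\<forall>a. le a a) \<and>
     (\<forall>a b c. le a b \<longrightarrow> le b c \<longrightarrow> le a c) \<and>
     (\<forall>a a' b b'. le a a' \<longrightarrow> le b b' \<longrightarrow> le (mu a b) (mu a' b')) \<and>
     (\<forall>a b. le a b \<longrightarrow> le (gam b) (gam a)) \<and>
     (\<forall>a. gam (gam a) = a) \<and>
     (\<forall>a b. le (mu a (gam (mu (gam b) a))) b) \<and>
     (\<forall>a b. le (mu (gam (mu a (gam b))) a) b)"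

definition target_mult :: "('a \<Rightarrow> 'a \<Rightarrow> 'a) \<Rightarrow> ('a \<Rightarrow> 'a) \<Rightarrow> 'a \<Rightarrow> 'a \<Rightarrow> 'a" where
  "target_mult mu gam a b = gam (mu (gam a) (gam b))"

definition adjoint_pair :: "('a \<Rightarrow> 'a \<Rightarrow> bool) \<Rightarrow> ('a \<Rightarrow> 'a) \<Rightarrow> ('a \<Rightarrow> 'a) \<Rightarrow> bool" where
  "adjoint_pair le L R \<longleftrightarrow>
     (\<forall>b b'. le b b' \<longrightarrow> le (L b) (L b')) \<and> (\<forall>c c'. le c c' \<longrightarrow> le (R c) (R c')) \<and>
     (\<forall>b c. le (L b) c \<longleftrightarrow> le b (R c))"

end

theory Submission
  imports Defs
begin

theorem theorem1:
  fixes le :: "'a \<Rightarrow> 'a \<Rightarrow> bool" and mu :: "'a \<Rightarrow> 'a \<Rightarrow> 'a" and gam :: "'a \<Rightarrow> 'a"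
  assumes "preordered_heap le mu gam"
  shows "\<forall>a. adjoint_pair le (\<lambda>b. mu a b) (\<lambda>c. target_mult mu gam c (gam a))
            \<and> adjoint_pair le (\<lambda>b. mu b a) (\<lambda>c. target_mult mu gam (gam a) c)"
proof
  fix a
  have refl: "\<And>x. le x x" and tr: "\<And>x y z. le x y \<Longrightarrow> le y z \<Longrightarrow> le x z"
    and mo: "\<And>x x' y y'. le x x' \<Longrightarrow> le y y' \<Longrightarrow> le (mu x y) (mu x' y')"
    and an: "\<And>x y. le x y \<Longrightarrow> le (gam y) (gam x)"
    and inv: "\<And>x. gam (gam x) = x"
    and l: "\<And>x y. le (mu x (gam (mu (gam y) x))) y"
    and r: "\<And>x y. le (mu (gam (mu x (gam y))) x) y"
    using assms unfolding preordered_heap_def by blast+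
  have u1: "\<And>b. le b (gam (mu (gam (mu a b)) a))"
    using an[OF r[of a "gam b" for b]] inv by metis
  have u2: "\<And>b. le b (gam (mu a (gam (mu b a))))"
    using an[OF l[of a "gam b" for b]] inv by metis
  have A: "adjoint_pair le (\<lambda>b. mu a b) (\<lambda>c. target_mult mu gam c (gam a))"
    unfolding adjoint_pair_def target_mult_def inv
  proof (intro conjI allI impI iffI)
    fix b b' assume "le b b'" thus "le (mu a b) (mu a b')" using mo refl by blast
  next
    fix c c' assume "le c c'" thus "le (gam (mu (gam c) a)) (gam (mu (gam c') a))"
      using mo refl an by blast
  next
    fix b c assume "le (mu a b) c"
    hence "le (gam (mu (gam (mu a b)) a)) (gam (mu (gam c) a))" using mo refl an by blast
    thus "le b (gam (mu (gam c) a))" using u1 tr by blast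
  next
    fix b c assume "le b (gam (mu (gam c) a))"
    hence "le (mu a b) (mu a (gam (mu (gam c) a)))" using mo refl by blast
    thus "le (mu a b) c" using l tr by blast
  qed
  have B: "adjoint_pair le (\<lambda>b. mu b a) (\<lambda>c. target_mult mu gam (gam a) c)"
    unfolding adjoint_pair_def target_mult_def inv
  proof (intro conjI allI impI iffI)
    fix b b' assume "le b b'" thus "le (mu b a) (mu b' a)" using mo refl by blast
  next
    fix c c' assume "le c c'" thus "le (gam (mu a (gam c))) (gam (mu a (gam c')))"
      using mo refl an by blast
  next
    fix b c assume "le (mu b a) c"
    hence "le (gam (mu a (gam (mu b a)))) (gam (mu a (gam c)))" using mo refl an by blast
    thus "le b (gam (mu a (gam c)))" using u2 tr by blast
  next
    fix b c assume "le b (gam (mu a (gam c)))"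
    hence "le (mu b a) (mu (gam (mu a (gam c))) a)" using mo refl by blast
    thus "le (mu b a) c" using r tr by blast
  qed
  show "adjoint_pair le (\<lambda>b. mu a b) (\<lambda>c. target_mult mu gam c (gam a))
            \<and> adjoint_pair le (\<lambda>b. mu b a) (\<lambda>c. target_mult mu gam (gam a) c)"
    using A B by blast
qed

end
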